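(* Let $(X,d,\mu)$ be a metric measure space satisfying $\mathrm{BG}(k,n)$ with constant $C$ for some $k\in\mathbb{R}$, $n\ge1$, $C\ge1$. Then the Hausdorff dimension of $X$ satisfies $\dim_H(X)\le n$.
   Context: A metric measure space $(X,d,\mu)$ means a complete, locally compact length space $(X,d)$ equipped with a Borel measure $\mu$. $B_r(x)$ and $\overline B_r(x)$ denote the open and closed balls of radius $r$ about $x$. For $k\in\mathbb{R}$ let $\mathsf s_k(t)=\sin(\sqrt{k}\,t)/\sqrt{k}$ if $k>0$, $\mathsf s_k(t)=t$ if $k=0$, $\mathsf s_k(t)=\sinh(\sqrt{-k}\,t)/\sqrt{-k}$ if $k<0$. For real $n\ge1$ and $0\le r_1<r_2$ set $V_{k,n}(r_1,r_2)=\alpha_{n-1}\int_{r_1}^{r_2}\mathsf s_k(t)^{n-1}\,dt$ with $\alpha_{n-1}=2\pi^{n/2}/\Gamma(n/2)$. For $x\in X$ let $A_{r_1,r_2}(x)=B_{r_2}(x)\setminus\overline B_{r_1}(x)$ and $A_{0,r}(x)=B_r(x)$. For a measurable $U\subset A_{r_1,r_2}(x)$ and $0\le s_1<s_2$ with $s_1\le r_1$, $s_2\le r_2$, let $S_{s_1,s_2}(x,U)=\{y\in A_{s_1,s_2}(x): d(x,y)+d(y,z)=d(x,z)\text{ for some }z\in U\}$. $(X,d,\mu)$ satisfies $\mathrm{BG}(k,n)$ with constant $C\ge1$ if for every $x\in X$, all $0\le r_1<r_2$, $0\le s_1<s_2$ with $s_1\le r_1$, $s_2\le r_2$, and every measurable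 $U\subset A_{r_1,r_2}(x)$, one has $\mu(U)/\mu(S_{s_1,s_2}(x,U))\le C\,V_{k,n}(r_1,r_2)/V_{k,n}(s_1,s_2)$. *)

theory Defs
  imports "HOL-Analysis.Analysis"
begin

definition partition_sum :: "(real \<Rightarrow> 'a::metric_space) \<Rightarrow> (nat \<Rightarrow> real) \<Rightarrow> nat \<Rightarrow> real" where
  "partition_sum g t m = (\<Sum>i<m. dist (g (t i)) (g (t (Suc i))))"

definition curve_length :: "(real \<Rightarrow> 'a::metric_space) \<Rightarrow> ereal" where
  "curve_length g = (SUP (t, m) \<in> {(t, m). t 0 = 0 \<and> t m = 1 \<and> (\<forall>i<m. t i < t (Suc i))}.
      ereal (partition_sum g t m))"

definition length_space :: "'a::metric_space itself \<Rightarrow> bool" where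
  "length_space _ \<longleftrightarrow> (\<forall>x y :: 'a. ereal (dist x y) =
      (INF g \<in> {g. continuous_on {0..1} g \<and> g 0 = x \<and> g 1 = y}. curve_length g))"

text \<open>Metric measure space (X,d,mu) with X the whole type: complete, locally compact length space
  with a Borel measure mu, which is (as is standard for metric measure spaces) positive and finite on balls.\<close>
definition metric_measure_space :: "'a::metric_space measure \<Rightarrow> bool" where
  "metric_measure_space mu \<longleftrightarrow>
     complete (UNIV :: 'a set) \<and> locally_compact_space (euclidean :: 'a topology) \<and>
     length_space TYPE('a) \<and> sets mu = sets borel \<and>
     (\<forall>x r. r > 0 \<longrightarrow> 0 < emeasure mu (ball x r) \<and> emeasure mu (ball x r) < \<infinity>)"

definition sk :: "real \<Rightarrow> real \<Rightarrow> real" where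
  "sk k t = (if k > 0 then sin (sqrt k * t) / sqrt k
             else if k = 0 then t else sinh (sqrt (- k) * t) / sqrt (- k))"

definition alpha_const :: "real \<Rightarrow> real" where
  "alpha_const m = 2 * pi powr ((m + 1) / 2) / Gamma ((m + 1) / 2)"

definition Vkn :: "real \<Rightarrow> real \<Rightarrow> real \<Rightarrow> real \<Rightarrow> real" where
  "Vkn k n r1 r2 = alpha_const (n - 1) * integral {r1..r2} (\<lambda>t. sk k t powr (n - 1))"

definition annulus :: "'a::metric_space \<Rightarrow> real \<Rightarrow> real \<Rightarrow> 'a set" where
  "annulus x r1 r2 = (if r1 = 0 then ball x r2 else ball x r2 - cball x r1)"

definition Sset :: "'a::metric_space \<Rightarrow> real \<Rightarrow> real \<Rightarrow> 'a set \<Rightarrow> 'a set" where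
  "Sset x s1 s2 U = {y \<in> annulus x s1 s2. \<exists>z\<in>U. dist x y + dist y z = dist x z}"

text \<open>The measure of S (possibly not Borel) is its outer measure,
  which agrees with mu on measurable sets. For k > 0 radii are restricted to r2 \<le> pi/sqrt k,
  the range where the model volume is defined.\<close>
definition BG :: "'a::metric_space measure \<Rightarrow> real \<Rightarrow> real \<Rightarrow> real \<Rightarrow> bool" where
  "BG mu k n C \<longleftrightarrow>
     (\<forall>x r1 r2 s1 s2 U. 0 \<le> r1 \<and> r1 < r2 \<and> 0 \<le> s1 \<and> s1 < s2 \<and> s1 \<le> r1 \<and> s2 \<le> r2 \<and>
        (k > 0 \<longrightarrow> r2 \<le> pi / sqrt k) \<and>
        U \<in> sets mu \<and> U \<subseteq> annulus x r1 r2 \<longrightarrow>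
        emeasure mu U / outer_measure_of mu (Sset x s1 s2 U)
          \<le> ennreal (C * Vkn k n r1 r2 / Vkn k n s1 s2))"

definition diam_pow :: "real \<Rightarrow> 'a::metric_space set \<Rightarrow> real" where
  "diam_pow s A = (if A = {} then 0 else if s = 0 then 1 else diameter A powr s)"

definition hausdorff_pre :: "real \<Rightarrow> real \<Rightarrow> 'a::metric_space set \<Rightarrow> ennreal" where
  "hausdorff_pre s \<delta> A =
     (INF C \<in> {C :: nat \<Rightarrow> 'a set. A \<subseteq> (\<Union>i. C i) \<and> (\<forall>i. bounded (C i) \<and> diameter (C i) \<le> \<delta>)}.
        (\<Sum>i. ennreal (diam_pow s (C i))))"

definition hausdorff_measure :: "real \<Rightarrow> 'a::metric_space set \<Rightarrow> ennreal" where
  "hausdorff_measure s A = (SUP \<delta> \<in> {0<..}. hausdorff_pre s \<delta> A)"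

definition hausdorff_dim :: "'a::metric_space set \<Rightarrow> ereal" where
  "hausdorff_dim A = (INF s \<in> {s. 0 \<le> s \<and> hausdorff_measure s A = 0}. ereal s)"

end

theory Submission
  imports Defs
begin


lemma cos_lb: fixes x :: real assumes "0 \<le> x" shows "1 - x^2/2 \<le> cos x"
proof -
  let ?f = "\<lambda>x::real. cos x - 1 + x^2/2"
  have "\<And>u. \<lbrakk>0 \<le> u; u \<le> x\<rbrakk> \<Longrightarrow> (?f has_real_derivative (u - sin u)) (at u)"
    by (auto intro!: derivative_eq_intros simp: field_simps)
  then have "?f x \<ge> ?f 0"
    apply (intro DERIV_nonneg_imp_nondecreasing [OF assms])
    subgoal for u using sin_x_le_x[of u] by force
    done
  then show ?thesis by simp
qed

lemma sin_lb: fixes x :: real assumes "0 \<le> x" shows "x - x^3/6 \<le> sin x"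
proof -
  let ?f = "\<lambda>x::real. sin x - x + x^3/6"
  have "\<And>u. \<lbrakk>0 \<le> u; u \<le> x\<rbrakk> \<Longrightarrow> (?f has_real_derivative (cos u - 1 + u^2/2)) (at u)"
    by (auto intro!: derivative_eq_intros simp: field_simps power2_eq_square power3_eq_cube)
  then have "?f x \<ge> ?f 0"
    using cos_lb by (intro DERIV_nonneg_imp_nondecreasing [OF assms]) force
  then show ?thesis by simp
qed

lemma sin_half: fixes x :: real assumes "0 \<le> x" "x \<le> 1" shows "x/2 \<le> sin x"
proof -
  have "x*x \<le> 1" using assms by (simp add: mult_le_one)
  hence "x*x*x \<le> 1*x" using assms by (intro mult_right_mono) auto
  hence "x^3 \<le> x" by (simp add: power3_eq_cube)
  hence "x/2 \<le> x - x^3/6" using assms by simp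
  thus ?thesis using sin_lb[OF assms(1)] by linarith
qed

lemma sinh_lb: fixes x :: real assumes "0 \<le> x" shows "x \<le> sinh x"
proof -
  let ?f = "\<lambda>x::real. sinh x - x"
  have "\<And>u. \<lbrakk>0 \<le> u; u \<le> x\<rbrakk> \<Longrightarrow> (?f has_real_derivative (cosh u - 1)) (at u)"
    by (auto intro!: derivative_eq_intros simp: field_simps)
  then have "?f x \<ge> ?f 0"
    using cosh_real_ge_1 by (intro DERIV_nonneg_imp_nondecreasing [OF assms]) force
  then show ?thesis by simp
qed

lemma sk_cont: "continuous_on A (sk k)"
  unfolding sk_def by (cases "k > 0"; cases "k = 0") (auto intro!: continuous_intros)

lemma sk_bounds:
  obtains R a B where "R > 0" "k > 0 \<Longrightarrow> R \<le> pi / sqrt k" "a > 0"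
    "\<And>t. 0 \<le> t \<Longrightarrow> t \<le> R \<Longrightarrow> a * t \<le> sk k t \<and> sk k t \<le> B"
proof (cases "k > 0")
  case True
  define R where "R = 1 / sqrt k"
  have sk: "sk k t = sin (sqrt k * t) / sqrt k" for t using True by (simp add: sk_def)
  have R: "R > 0" "R \<le> pi / sqrt k" using True pi_gt3 unfolding R_def by (auto simp: divide_right_mono)
  have "(1/2) * t \<le> sk k t \<and> sk k t \<le> 1 / sqrt k" if "0 \<le> t" "t \<le> R" for t
  proof -
    have st: "0 \<le> sqrt k * t" "sqrt k * t \<le> 1" using that True unfolding R_def
      by (auto simp: field_simps)
    have "sqrt k * t / 2 \<le> sin (sqrt k * t)" using sin_half[OF st] .
    hence "t / 2 \<le> sk k t" using True by (simp add: sk field_simps)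
    moreover have "sk k t \<le> 1 / sqrt k" using True by (simp add: sk divide_right_mono)
    ultimately show ?thesis by simp
  qed
  then show ?thesis using that[OF R(1) R(2), of "1/2" "1/sqrt k"] by auto
next
  case False
  show ?thesis
  proof (cases "k = 0")
    case True
    have "1 * t \<le> sk k t \<and> sk k t \<le> 1" if "0 \<le> t" "t \<le> 1" for t
      using True that by (simp add: sk_def)
    then show ?thesis using that[of 1 1 1] False by auto
  next
    case k: False
    define c where "c = sqrt (- k)"
    have c: "c > 0" using k False unfolding c_def by auto
    have sk: "sk k t = sinh (c * t) / c" for t using k False by (simp add: sk_def c_def)
    have "1 * t \<le> sk k t \<and> sk k t \<le> sinh c / c" if "0 \<le> t" "t \<le> 1" for t
    proof -
      have "c * t \<le> sinh (c * t)" using sinh_lb[of "c*t"] c that by simp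
      hence "t \<le> sk k t" using c by (simp add: sk field_simps)
      moreover have "sinh (c * t) \<le> sinh c" using c that by (simp add: mult_left_le)
      hence "sk k t \<le> sinh c / c" using c by (simp add: sk divide_right_mono)
      ultimately show ?thesis by simp
    qed
    then show ?thesis using that[of 1 1 "sinh c / c"] False by auto
  qed
qed

lemma alpha_pos: "n \<ge> 1 \<Longrightarrow> alpha_const (n - 1) > 0"
  unfolding alpha_const_def by auto

lemma int_lower:
  assumes "0 < u" "u < v" "a > 0" "\<And>t. u \<le> t \<Longrightarrow> t \<le> v \<Longrightarrow> a * t \<le> sk k t" "e \<ge> 0"
  shows "(v - u) * (a * u) powr e \<le> integral {u..v} (\<lambda>t. sk k t powr e)"
proof -
  have pos: "sk k t > 0" if "t \<in> {u..v}" for t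
    using assms(4)[of t] that assms(1,3) by (smt (verit) atLeastAtMost_iff mult_pos_pos)
  have "continuous_on {u..v} (\<lambda>t. sk k t powr e)"
    using pos by (intro continuous_on_powr sk_cont continuous_intros) (auto simp: less_le)
  hence int: "(\<lambda>t. sk k t powr e) integrable_on {u..v}" by (rule integrable_continuous_interval)
  have "integral {u..v} (\<lambda>t. (a * u) powr e) \<le> integral {u..v} (\<lambda>t. sk k t powr e)"
  proof (rule integral_le[OF _ int])
    fix t assume t: "t \<in> {u..v}"
    have "a * u \<le> a * t" using t assms by auto
    also have "\<dots> \<le> sk k t" using t assms by auto
    finally show "(a * u) powr e \<le> sk k t powr e"
      using assms by (intro powr_mono2) auto
  qed auto
  thus ?thesis using assms by simp
qed

lemma int_upper:
  assumes "0 < u" "u < v" "\<And>t. u \<le> t \<Longrightarrow> t \<le> v \<Longrightarrow> 0 < sk k t \<and> sk k t \<le> B" "e \<ge> 0"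
  shows "integral {u..v} (\<lambda>t. sk k t powr e) \<le> (v - u) * B powr e"
proof -
  have "continuous_on {u..v} (\<lambda>t. sk k t powr e)"
  proof (intro continuous_on_powr sk_cont continuous_intros ballI)
    fix t assume "t \<in> {u..v}" thus "sk k t \<noteq> 0" using assms(3)[of t] by auto
  qed
  hence int: "(\<lambda>t. sk k t powr e) integrable_on {u..v}" by (rule integrable_continuous_interval)
  have "integral {u..v} (\<lambda>t. sk k t powr e) \<le> integral {u..v} (\<lambda>t. B powr e)"
  proof (rule integral_le[OF int])
    fix t assume t: "t \<in> {u..v}"
    have "0 < sk k t \<and> sk k t \<le> B" using assms(3) t by auto
    thus "sk k t powr e \<le> B powr e"
      using assms by (intro powr_mono2) auto
  qed auto
  thus ?thesis using assms by simp
qed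

lemma Q_bound:
  assumes n: "n \<ge> 1" and R: "R > 0" and a: "a > 0"
    and b: "\<And>t. 0 \<le> t \<Longrightarrow> t \<le> R \<Longrightarrow> a * t \<le> sk k t \<and> sk k t \<le> B"
  obtains K where "K > 0" "\<And>r. 0 < r \<Longrightarrow> r \<le> R \<Longrightarrow>
     Vkn k n (r/2) r > 0 \<and> Vkn k n (r/2) R / Vkn k n (r/2) r \<le> K / r powr n"
proof -
  define al where "al = alpha_const (n - 1)"
  have al: "al > 0" using alpha_pos[OF n] by (simp add: al_def)
  have B: "B \<ge> 0" using b[of R] R a by (smt (verit) mult_pos_pos)
  define K where "K = 2 * R * B powr (n - 1) / (a/2) powr (n - 1) + 1"
  have "2 * R * B powr (n - 1) / (a/2) powr (n - 1) \<ge> 0" using R B a by simp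
  hence K: "K > 0" unfolding K_def by linarith
  have "Vkn k n (r/2) r > 0 \<and> Vkn k n (r/2) R / Vkn k n (r/2) r \<le> K / r powr n"
    if r: "0 < r" "r \<le> R" for r
  proof -
    have low: "(r - r/2) * (a * (r/2)) powr (n-1) \<le> integral {r/2..r} (\<lambda>t. sk k t powr (n-1))"
      using r n b a by (intro int_lower) auto
    have up: "integral {r/2..R} (\<lambda>t. sk k t powr (n-1)) \<le> (R - r/2) * B powr (n-1)"
    proof (rule int_upper)
      fix t assume t: "r/2 \<le> t" "t \<le> R"
      have "0 < a * t" using a t r by simp
      thus "0 < sk k t \<and> sk k t \<le> B" using b[of t] t r by auto
    qed (use r n in auto)
    define D where "D = (r/2) * ((a/2) powr (n-1) * r powr (n-1))"
    have D: "D > 0" unfolding D_def using r a by simp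
    have eqD: "(r - r/2) * (a * (r/2)) powr (n-1) = D"
      unfolding D_def using r a by (simp add: powr_mult[symmetric])
    have V1: "Vkn k n (r/2) r \<ge> al * D" unfolding Vkn_def al_def[symmetric]
      using low eqD al by (simp add: mult_left_mono)
    have V2: "Vkn k n (r/2) R \<le> al * (R * B powr (n-1))"
    proof -
      have "al * integral {r/2..R} (\<lambda>t. sk k t powr (n-1)) \<le> al * ((R - r/2) * B powr (n-1))"
        using up al by (intro mult_left_mono) auto
      also have "\<dots> \<le> al * (R * B powr (n-1))"
        using al r by (intro mult_left_mono mult_right_mono) auto
      finally show ?thesis by (simp add: Vkn_def al_def)
    qed
    have pos: "Vkn k n (r/2) r > 0" using V1 al D by (smt (verit) mult_pos_pos)
    have "Vkn k n (r/2) R / Vkn k n (r/2) r \<le> (al * (R * B powr (n-1))) / (al * D)"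
      using V1 V2 al D R B by (intro frac_le) auto
    also have "\<dots> = 2 * R * B powr (n - 1) / (a/2) powr (n - 1) / r powr n"
    proof -
      have rn: "r powr n = r * r powr (n-1)" using r by (simp add: powr_mult_base)
      have e1: "al * (R * B powr (n-1)) / (al * D) = R * B powr (n-1) / D" using al by simp
      have e2: "D = (a/2) powr (n-1) * r powr n / 2" unfolding D_def rn by simp
      have gen: "\<And>P Z X::real. P > 0 \<Longrightarrow> Z > 0 \<Longrightarrow> X / (P * Z / 2) = 2 * X / P / Z"
        by (simp add: field_simps)
      have "R * B powr (n-1) / D = 2 * R * B powr (n - 1) / (a/2) powr (n - 1) / r powr n"
        unfolding e2 using a r by (subst gen) auto
      with e1 show ?thesis by simp
    qed
    also have "\<dots> \<le> K / r powr n" unfolding K_def using r by (intro divide_right_mono) auto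
    finally show ?thesis using pos by simp
  qed
  thus ?thesis using that K by blast
qed



lemma ennreal_div_le:
  fixes a b m :: ennreal
  assumes "a / b \<le> ennreal c" "b \<le> m" "m < top"
  shows "a \<le> ennreal c * m"
proof (cases "b = 0")
  case True
  then show ?thesis using assms(1) by (auto split: if_splits simp: top_unique)
next
  case False
  have ot: "b < top" using assms by auto
  have "a = (a / b) * b" using False ot by (simp add: ennreal_divide_times)
  also have "\<dots> \<le> ennreal c * b" using assms(1) by (intro mult_right_mono) auto
  also have "\<dots> \<le> ennreal c * m" using assms(2) by (intro mult_left_mono) auto
  finally show ?thesis .
qed

lemma diameter_ball_le:
  fixes x :: "'a::metric_space"
  assumes "r > 0" shows "diameter (ball x r) \<le> 2 * r"
proof -
  have ne: "ball x r \<noteq> {}" using assms by auto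
  have "(SUP (a,b)\<in>ball x r \<times> ball x r. dist a b) \<le> 2 * r"
  proof (rule cSUP_least)
    show "ball x r \<times> ball x r \<noteq> {}" using ne by auto
    fix p assume "p \<in> ball x r \<times> ball x r"
    then obtain a b where p: "p = (a,b)" "a \<in> ball x r" "b \<in> ball x r" by auto
    have "dist a b \<le> dist a x + dist x b" by (rule dist_triangle)
    also have "\<dots> \<le> 2 * r" using p by (simp add: dist_commute)
    finally show "(case p of (a, b) \<Rightarrow> dist a b) \<le> 2 * r" using p by simp
  qed
  thus ?thesis using ne by (simp add: diameter_def)
qed

context
  fixes mu :: "'a::metric_space measure" and k n C :: real
  assumes mms: "metric_measure_space mu" and n: "n \<ge> 1" and Cge: "C \<ge> 1"
    and bg: "BG mu k n C"
begin

lemma sets_mu: "sets mu = sets borel"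
  using mms by (simp add: metric_measure_space_def)

lemma ball_sets[measurable]: "ball x r \<in> sets mu"
  by (simp add: sets_mu)

lemma cball_sets[measurable]: "cball x r \<in> sets mu"
  by (simp add: sets_mu)

lemma ball_fin: "emeasure mu (ball x r) < top"
proof (cases "r > 0")
  case True then show ?thesis using mms by (simp add: metric_measure_space_def)
next
  case False then have "ball x r = {}" by (intro ball_empty) simp
  then have "emeasure mu (ball x r) = 0" by (metis emeasure_empty)
  then show ?thesis by simp
qed

lemma ball_pos: assumes "r > 0" shows "measure mu (ball x r) > 0"
proof -
  have "0 < emeasure mu (ball x r)" using mms assms unfolding metric_measure_space_def by auto
  moreover have "emeasure mu (ball x r) = ennreal (measure mu (ball x r))"
    using ball_fin[of x r] by (intro emeasure_eq_ennreal_measure) auto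
  ultimately show ?thesis by simp
qed

lemma ball_fmeas: "ball x r \<in> fmeasurable mu"
  using ball_fin[of x r] by (intro fmeasurableI ball_sets) simp

lemma emeasure_ball: "emeasure mu (ball x r) = ennreal (measure mu (ball x r))"
  using ball_fin[of x r] by (intro emeasure_eq_ennreal_measure) auto

lemma KI:
  assumes R: "R > 0" "k > 0 \<Longrightarrow> R \<le> pi / sqrt k" and r: "0 < r" "r \<le> R / 2"
    and Q: "C * Vkn k n (r/2) R / Vkn k n (r/2) r \<le> q"
    and z: "dist y z < R / 2" and q0: "q \<ge> 0"
  shows "measure mu (ball y (R/2)) \<le> (q + 1) * measure mu (ball z r)"
proof -
  define U where "U = ball z R - cball z (r/2)"
  have ann: "annulus z (r/2) R = U" using r by (simp add: annulus_def U_def)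
  have U: "U \<in> sets mu" unfolding U_def by measurable
  have "emeasure mu U / outer_measure_of mu (Sset z (r/2) r U)
          \<le> ennreal (C * Vkn k n (r/2) R / Vkn k n (r/2) r)"
    using bg[unfolded BG_def, rule_format, of "r/2" R "r/2" r U z] r R U ann by auto
  also have "\<dots> \<le> ennreal q" using Q by (rule ennreal_leI)
  finally have 1: "emeasure mu U / outer_measure_of mu (Sset z (r/2) r U) \<le> ennreal q" .
  have "Sset z (r/2) r U \<subseteq> ball z r" using r by (auto simp: Sset_def annulus_def)
  hence "outer_measure_of mu (Sset z (r/2) r U) \<le> emeasure mu (ball z r)"
    using outer_measure_of_mono[of "Sset z (r/2) r U" "ball z r" mu] by simp
  from ennreal_div_le[OF 1 this ball_fin] have "emeasure mu U \<le> ennreal q * emeasure mu (ball z r)" .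
  have "emeasure mu U \<le> emeasure mu (ball z R)" unfolding U_def by (intro emeasure_mono) auto
  hence Ufin: "emeasure mu U < top" using ball_fin[of z R] by auto
  have "ennreal (measure mu U) \<le> ennreal (q * measure mu (ball z r))"
    using \<open>emeasure mu U \<le> ennreal q * emeasure mu (ball z r)\<close> Ufin q0
    by (simp add: emeasure_ball emeasure_eq_ennreal_measure ennreal_mult)
  hence mU: "measure mu U \<le> q * measure mu (ball z r)" using q0 by (simp add: ennreal_le_iff)
  have sub: "ball y (R/2) \<subseteq> ball z R"
  proof
    fix w assume "w \<in> ball y (R/2)"
    hence "dist y w < R/2" by simp
    moreover have "dist z w \<le> dist z y + dist y w" by (rule dist_triangle)
    ultimately show "w \<in> ball z R" using z by (simp add: dist_commute)
  qed
  have "measure mu (ball y (R/2)) \<le> measure mu (ball z R)"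
    using sub by (intro measure_mono_fmeasurable ball_sets ball_fmeas)
  also have "\<dots> = measure mu (U \<union> ball z r)"
    using r by (intro arg_cong[where f="measure mu"]) (auto simp: U_def)
  also have "\<dots> \<le> measure mu U + measure mu (ball z r)"
    using U by (intro measure_Un_le) auto
  also have "\<dots> \<le> (q + 1) * measure mu (ball z r)" using mU by (simp add: algebra_simps)
  finally show ?thesis .
qed

lemma LB:
  obtains R where "R > 0" "\<And>y. \<exists>c>0. \<forall>z r. dist y z < R/2 \<longrightarrow> 0 < r \<longrightarrow> r \<le> R/2 \<longrightarrow>
      c * r powr n \<le> measure mu (ball z r)"
proof -
  obtain R a B where R: "R > 0" "k > 0 \<Longrightarrow> R \<le> pi / sqrt k" and a: "a > 0"
    and b: "\<And>t. 0 \<le> t \<Longrightarrow> t \<le> R \<Longrightarrow> a * t \<le> sk k t \<and> sk k t \<le> B"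
    using sk_bounds by blast
  obtain K where K: "K > 0" and KQ: "\<And>r. 0 < r \<Longrightarrow> r \<le> R \<Longrightarrow>
     Vkn k n (r/2) r > 0 \<and> Vkn k n (r/2) R / Vkn k n (r/2) r \<le> K / r powr n"
    using Q_bound[OF n R(1) a b] by blast
  have "\<exists>c>0. \<forall>z r. dist y z < R/2 \<longrightarrow> 0 < r \<longrightarrow> r \<le> R/2 \<longrightarrow>
      c * r powr n \<le> measure mu (ball z r)" for y
  proof -
    define my where "my = measure mu (ball y (R/2))"
    have my: "my > 0" unfolding my_def using ball_pos R by simp
    define E where "E = C * K + (R/2) powr n"
    have E: "E > 0" unfolding E_def using K Cge by (simp add: add_pos_nonneg)
    have "my / E * r powr n \<le> measure mu (ball z r)"
      if z: "dist y z < R/2" and r: "0 < r" "r \<le> R/2" for z r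
    proof -
      define q where "q = C * (K / r powr n)"
      have q0: "q \<ge> 0" unfolding q_def using Cge K r by simp
      have "C * Vkn k n (r/2) R / Vkn k n (r/2) r = C * (Vkn k n (r/2) R / Vkn k n (r/2) r)"
        by simp
      also have "\<dots> \<le> q" unfolding q_def using KQ[of r] r R Cge
        by (intro mult_left_mono) auto
      finally have Q: "C * Vkn k n (r/2) R / Vkn k n (r/2) r \<le> q" .
      have ki: "my \<le> (q + 1) * measure mu (ball z r)"
        unfolding my_def by (rule KI[OF R r Q z q0])
      have rn: "r powr n > 0" using r by simp
      have "my * r powr n \<le> (q + 1) * r powr n * measure mu (ball z r)"
        using mult_right_mono[OF ki, of "r powr n"] rn by (simp add: algebra_simps)
      also have "(q + 1) * r powr n = C * K + r powr n" unfolding q_def using rn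
        by (simp add: field_simps)
      also have "(C * K + r powr n) * measure mu (ball z r) \<le> E * measure mu (ball z r)"
        unfolding E_def using r n by (intro mult_right_mono add_left_mono powr_mono2) auto
      finally have "my * r powr n \<le> E * measure mu (ball z r)" .
      thus ?thesis using E by (simp add: field_simps)
    qed
    thus ?thesis using my E by (intro exI[of _ "my / E"]) auto
  qed
  thus ?thesis using that R(1) by blast
qed

lemma COV:
  assumes R: "R > 0" and c: "c > 0"
    and cb: "\<forall>z r. dist y z < R/2 \<longrightarrow> 0 < r \<longrightarrow> r \<le> R/2 \<longrightarrow> c * r powr n \<le> measure mu (ball z r)"
    and r: "0 < r" "r \<le> R/2"
  shows "\<exists>S. finite S \<and> S \<subseteq> ball y (R/2) \<and> ball y (R/2) \<subseteq> (\<Union>s\<in>S. ball s r) \<and>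
           real (card S) * (c * (r/2) powr n) \<le> measure mu (ball y R)"
proof -
  define M where "M = measure mu (ball y R)"
  define L where "L = c * (r/2) powr n"
  have L: "L > 0" unfolding L_def using c r by simp
  define sep where "sep S \<longleftrightarrow> S \<subseteq> ball y (R/2) \<and> finite S \<and> (\<forall>s\<in>S. \<forall>t\<in>S. s \<noteq> t \<longrightarrow> r \<le> dist s t)"
    for S
  have bound: "real (card S) * L \<le> M" if S: "sep S" for S
  proof -
    have fin: "finite S" and sub: "S \<subseteq> ball y (R/2)" and sp: "\<forall>s\<in>S. \<forall>t\<in>S. s \<noteq> t \<longrightarrow> r \<le> dist s t"
      using S by (auto simp: sep_def)
    have disj: "disjoint_family_on (\<lambda>s. ball s (r/2)) S"
    proof -
      have False if st: "s \<in> S" "t \<in> S" "s \<noteq> t" and w: "w \<in> ball s (r/2)" "w \<in> ball t (r/2)" for s t w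
      proof -
        have "dist s t \<le> dist s w + dist w t" by (rule dist_triangle)
        also have "\<dots> < r" using w by (simp add: dist_commute)
        finally show False using sp st by force
      qed
      thus ?thesis unfolding disjoint_family_on_def by blast
    qed
    have U: "(\<Union>s\<in>S. ball s (r/2)) \<subseteq> ball y R"
    proof
      fix w assume "w \<in> (\<Union>s\<in>S. ball s (r/2))"
      then obtain s where "s \<in> S" "dist s w < r/2" by auto
      moreover have "dist y s < R/2" using sub \<open>s \<in> S\<close> by auto
      moreover have "dist y w \<le> dist y s + dist s w" by (rule dist_triangle)
      ultimately show "w \<in> ball y R" using r by simp
    qed
    have "(\<Sum>s\<in>S. emeasure mu (ball s (r/2))) = emeasure mu (\<Union>s\<in>S. ball s (r/2))"
      using disj fin by (intro sum_emeasure) auto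
    also have "\<dots> \<le> emeasure mu (ball y R)" using U by (intro emeasure_mono) auto
    finally have "ennreal (\<Sum>s\<in>S. measure mu (ball s (r/2))) \<le> ennreal M"
      by (simp add: emeasure_ball M_def)
    hence sM: "(\<Sum>s\<in>S. measure mu (ball s (r/2))) \<le> M"
      by (simp add: ennreal_le_iff M_def)
    have "real (card S) * L \<le> (\<Sum>s\<in>S. measure mu (ball s (r/2)))"
    proof (rule sum_bounded_below)
      fix s assume "s \<in> S"
      hence "dist y s < R/2" using sub by auto
      thus "L \<le> measure mu (ball s (r/2))" unfolding L_def using cb r by auto
    qed
    thus ?thesis using sM by linarith
  qed
  have "\<forall>S. sep S \<longrightarrow> card S < nat \<lceil>M / L\<rceil> + 1"
  proof (intro allI impI)
    fix S assume "sep S"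
    hence "real (card S) \<le> M / L" using bound L by (simp add: field_simps)
    hence "real (card S) \<le> real (nat \<lceil>M / L\<rceil>)" by linarith
    thus "card S < nat \<lceil>M / L\<rceil> + 1" by linarith
  qed
  moreover have "sep {}" by (simp add: sep_def)
  ultimately obtain S where S: "sep S" and maxS: "\<And>S'. sep S' \<Longrightarrow> card S' \<le> card S"
    using ex_has_greatest_nat[of sep "{}" card] by blast
  have cov: "ball y (R/2) \<subseteq> (\<Union>s\<in>S. ball s r)"
  proof
    fix w assume w: "w \<in> ball y (R/2)"
    show "w \<in> (\<Union>s\<in>S. ball s r)"
    proof (rule ccontr)
      assume "w \<notin> (\<Union>s\<in>S. ball s r)"
      hence far: "\<forall>s\<in>S. r \<le> dist s w" by (auto simp: not_less)
      hence wS: "w \<notin> S" using r by force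
      have "sep (insert w S)" using S w far unfolding sep_def by (auto simp: dist_commute)
      hence "card (insert w S) \<le> card S" by (rule maxS)
      moreover have "card (insert w S) = Suc (card S)" using S wS by (simp add: sep_def)
      ultimately show False by simp
    qed
  qed
  show ?thesis using S cov bound[OF S] by (auto simp: sep_def L_def M_def)
qed

lemma H_local:
  assumes R: "R > 0" and c: "c > 0"
    and cb: "\<forall>z r. dist y z < R/2 \<longrightarrow> 0 < r \<longrightarrow> r \<le> R/2 \<longrightarrow> c * r powr n \<le> measure mu (ball z r)"
    and s: "s > n" and d: "\<delta> > 0" and e: "\<epsilon> > 0"
  shows "\<exists>F::nat \<Rightarrow> 'a set. ball y (R/2) \<subseteq> (\<Union>i. F i) \<and> (\<forall>i. bounded (F i) \<and> diameter (F i) \<le> \<delta>)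
           \<and> (\<Sum>i. ennreal (diam_pow s (F i))) \<le> ennreal \<epsilon>"
proof -
  define M where "M = measure mu (ball y R)"
  have M: "M \<ge> 0" unfolding M_def by simp
  define A where "A = M * 2 powr n * 2 powr s / c + 1"
  have A: "A > 0" unfolding A_def using M c by (simp add: add_nonneg_pos)
  define r0 where "r0 = (\<epsilon> / A) powr (1 / (s - n))"
  have r0: "r0 > 0" unfolding r0_def using e A by simp
  define r where "r = min (min (R/2) (\<delta>/2)) r0"
  have r: "0 < r" "r \<le> R/2" "2 * r \<le> \<delta>" "r \<le> r0" unfolding r_def using R d r0 by auto
  have rsn: "r powr (s - n) \<le> \<epsilon> / A"
  proof -
    have "r powr (s - n) \<le> r0 powr (s - n)" using r s by (intro powr_mono2) auto
    also have "\<dots> = \<epsilon> / A" unfolding r0_def using s e A by (simp add: powr_powr)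
    finally show ?thesis .
  qed
  obtain S where S: "finite S" "S \<subseteq> ball y (R/2)" "ball y (R/2) \<subseteq> (\<Union>x\<in>S. ball x r)"
     and cS: "real (card S) * (c * (r/2) powr n) \<le> M"
    using COV[OF R c cb r(1,2)] unfolding M_def by blast
  have key: "real (card S) * (2 * r) powr s \<le> \<epsilon>"
  proof -
    have e1: "(r/2) powr n = r powr n / 2 powr n" using r by (simp add: powr_divide)
    have e2: "(2 * r) powr s = 2 powr s * r powr s" using r by (simp add: powr_mult)
    have e3: "r powr s = r powr n * r powr (s - n)" using r by (simp add: powr_add[symmetric])
    have gen: "\<And>X P Q T Z::real. c > 0 \<Longrightarrow> P > 0 \<Longrightarrow> X * (2 powr s * (P * Z)) = X * (c * (P / 2 powr n)) * (2 powr n * 2 powr s / c) * Z"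
      by (simp add: field_simps)
    have "real (card S) * (2 * r) powr s = real (card S) * (c * (r/2) powr n) * (2 powr n * 2 powr s / c) * r powr (s - n)"
      unfolding e1 e2 e3 using c r by (intro gen) auto
    also have "\<dots> \<le> M * (2 powr n * 2 powr s / c) * r powr (s - n)"
      using cS c by (intro mult_right_mono) auto
    also have "\<dots> \<le> A * r powr (s - n)"
      unfolding A_def using c by (intro mult_right_mono) auto
    also have "\<dots> \<le> A * (\<epsilon> / A)" using rsn A by (intro mult_left_mono) auto
    also have "\<dots> = \<epsilon>" using A by simp
    finally show ?thesis .
  qed
  obtain xs where xs: "set xs = S" "distinct xs" using finite_distinct_list[OF S(1)] by blast
  define F where "F i = (if i < length xs then ball (xs ! i) r else {})" for i
  have cover: "ball y (R/2) \<subseteq> (\<Union>i. F i)"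
  proof
    fix w assume "w \<in> ball y (R/2)"
    then obtain x where "x \<in> S" "w \<in> ball x r" using S(3) by auto
    then obtain i where "i < length xs" "xs ! i = x" using xs by (auto simp: in_set_conv_nth)
    thus "w \<in> (\<Union>i. F i)" using \<open>w \<in> ball x r\<close> unfolding F_def by force
  qed
  have bd: "bounded (F i) \<and> diameter (F i) \<le> \<delta>" for i
    using diameter_ball_le[OF r(1), of "xs ! i"] r d unfolding F_def by auto
  have dp0: "diam_pow s X \<ge> 0" for X :: "'a set" unfolding diam_pow_def by auto
  have dpb: "diam_pow s (F i) \<le> (2 * r) powr s" for i
  proof (cases "i < length xs")
    case True
    have "diameter (ball (xs ! i) r) \<ge> 0" by (intro diameter_ge_0) auto
    moreover have "ball (xs ! i) r \<noteq> {}" using r by auto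
    ultimately show ?thesis using True s n diameter_ball_le[OF r(1), of "xs ! i"]
      unfolding F_def diam_pow_def by (auto intro: powr_mono2)
  next
    case False then show ?thesis unfolding F_def diam_pow_def by simp
  qed
  have "(\<Sum>i. ennreal (diam_pow s (F i))) = (\<Sum>i<length xs. ennreal (diam_pow s (F i)))"
    by (rule suminf_finite) (auto simp: F_def diam_pow_def)
  also have "\<dots> = ennreal (\<Sum>i<length xs. diam_pow s (F i))" using dp0 by simp
  also have "\<dots> \<le> ennreal \<epsilon>"
  proof (rule ennreal_leI)
    have "(\<Sum>i<length xs. diam_pow s (F i)) \<le> real (card {..<length xs}) * (2 * r) powr s"
      using dpb by (intro sum_bounded_above) auto
    also have "card {..<length xs} = card S" using xs distinct_card by fastforce
    finally show "(\<Sum>i<length xs. diam_pow s (F i)) \<le> \<epsilon>" using key by linarith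
  qed
  finally show ?thesis using cover bd by blast
qed

lemma curve_exists:
  fixes x w :: 'a
  obtains g :: "real \<Rightarrow> 'a" where "continuous_on {0..1} g" "g 0 = x" "g 1 = w"
proof -
  have ls: "length_space TYPE('a)" using mms by (simp add: metric_measure_space_def)
  hence eq: "ereal (dist x w) = (INF g \<in> {g. continuous_on {0..1} g \<and> g 0 = x \<and> g 1 = w}. curve_length g)"
    unfolding length_space_def by blast
  have "{g :: real \<Rightarrow> 'a. continuous_on {0..1} g \<and> g 0 = x \<and> g 1 = w} \<noteq> {}"
  proof
    assume E: "{g :: real \<Rightarrow> 'a. continuous_on {0..1} g \<and> g 0 = x \<and> g 1 = w} = {}"
    have "ereal (dist x w) = Inf {}" using eq by (simp only: E image_empty)
    thus False by (simp add: top_ereal_def)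
  qed
  thus ?thesis using that by blast
qed

lemma centers:
  assumes R: "R > 0"
    and cy: "\<And>y. \<exists>c>0. \<forall>z r. dist y z < R/2 \<longrightarrow> 0 < r \<longrightarrow> r \<le> R/2 \<longrightarrow> c * r powr n \<le> measure mu (ball z r)"
  obtains D :: "'a set" where "countable D" "D \<noteq> {}" "\<And>x. \<exists>d\<in>D. x \<in> ball d (R/2)"
proof -
  define \<rho> where "\<rho> = R/2"
  have \<rho>: "\<rho> > 0" using R by (simp add: \<rho>_def)
  have ex: "\<exists>S. finite S \<and> ball y \<rho> \<subseteq> (\<Union>s\<in>S. ball s (\<rho>/2))" for y :: 'a
  proof -
    obtain c where c: "c > 0" and cb: "\<forall>(z::'a) r. dist y z < R/2 \<longrightarrow> 0 < r \<longrightarrow> r \<le> R/2 \<longrightarrow> c * r powr n \<le> measure mu (ball z r)"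
      using cy by blast
    show ?thesis using COV[OF R c cb, of "\<rho>/2"] \<rho> unfolding \<rho>_def by auto
  qed
  define \<Phi> where "\<Phi> y = (SOME S. finite S \<and> ball y \<rho> \<subseteq> (\<Union>s\<in>S. ball s (\<rho>/2)))" for y :: 'a
  have \<Phi>: "finite (\<Phi> y) \<and> ball y \<rho> \<subseteq> (\<Union>s\<in>\<Phi> y. ball s (\<rho>/2))" for y
    unfolding \<Phi>_def using someI_ex[OF ex[of y]] .
  fix x0 :: 'a
  define Ds where "Ds = rec_nat {x0} (\<lambda>m A. \<Union>(\<Phi> ` A))"
  have Ds0: "Ds 0 = {x0}" and DsS: "Ds (Suc m) = \<Union>(\<Phi> ` Ds m)" for m by (simp_all add: Ds_def)
  have finDs: "finite (Ds m)" for m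
    by (induction m) (use \<Phi> in \<open>auto simp: Ds0 DsS\<close>)
  define D where "D = (\<Union>m. Ds m)"
  have cD: "countable D" unfolding D_def using finDs by (intro countable_UN) (auto intro: countable_finite)
  have neD: "D \<noteq> {}" unfolding D_def using Ds0 by auto
  have cov: "\<exists>d\<in>D. x \<in> ball d \<rho>" for x
  proof -
    obtain g :: "real \<Rightarrow> 'a" where g: "continuous_on {0..1} g" "g 0 = x0" "g 1 = x"
      by (rule curve_exists[of x0 x])
    have "uniformly_continuous_on {0..1} g" using g(1) by (intro compact_uniformly_continuous) auto
    hence "\<forall>e>0. \<exists>d>0. \<forall>t\<in>{0..1}. \<forall>t'\<in>{0..1}. dist t' t < d \<longrightarrow> dist (g t') (g t) < e"
      by (simp only: uniformly_continuous_on_def)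
    then obtain \<eta> where \<eta>: "\<eta> > 0" and uc0: "\<forall>t\<in>{0..1}. \<forall>t'\<in>{0..1}. dist t' t < \<eta> \<longrightarrow> dist (g t') (g t) < \<rho>/2"
      using \<rho> half_gt_zero by blast
    have uc: "\<And>t t'. t \<in> {0..1} \<Longrightarrow> t' \<in> {0..1} \<Longrightarrow> dist t' t < \<eta> \<Longrightarrow> dist (g t') (g t) < \<rho>/2"
      using uc0 by blast
    obtain N :: nat where N: "N > 0" "inverse (real N) < \<eta>" using ex_inverse_of_nat_less[OF \<eta>] by blast
    have step: "\<exists>d\<in>Ds i. dist d (g (real i / real N)) < \<rho>/2" if "i \<le> N" for i
      using that
    proof (induction i)
      case 0 then show ?case using g \<rho> by (simp add: Ds0)
    next
      case (Suc i)
      then obtain d where d: "d \<in> Ds i" "dist d (g (real i / real N)) < \<rho>/2" by auto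
      have t1: "real i / real N \<in> {0..1}" "real (Suc i) / real N \<in> {0..1}" using Suc.prems N by auto
      have "dist (real (Suc i) / real N) (real i / real N) = inverse (real N)"
        using N by (simp add: dist_real_def field_simps)
      hence "dist (g (real (Suc i) / real N)) (g (real i / real N)) < \<rho>/2"
        using uc[OF t1(1) t1(2)] N by simp
      hence "dist d (g (real (Suc i) / real N)) < \<rho>"
        using d dist_triangle[of d "g (real (Suc i) / real N)" "g (real i / real N)"]
        by (simp add: dist_commute)
      then obtain s where s: "s \<in> \<Phi> d" "dist s (g (real (Suc i) / real N)) < \<rho>/2"
        using \<Phi>[of d] by auto
      have "s \<in> Ds (Suc i)" using s d by (auto simp: DsS)
      thus ?case using s by blast
    qed
    from step[of N] obtain d where "d \<in> Ds N" "dist d x < \<rho>/2" using N g by auto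
    moreover have "d \<in> D" unfolding D_def using \<open>d \<in> Ds N\<close> by blast
    ultimately show ?thesis using \<rho> by (intro bexI[of _ d]) auto
  qed
  have cov': "\<And>x. \<exists>d\<in>D. x \<in> ball d (R/2)" using cov by (simp add: \<rho>_def)
  show ?thesis using that cD neD cov' by blast
qed

lemma hp0:
  assumes s: "s > n" and d: "\<delta> > 0"
  shows "hausdorff_pre s \<delta> (UNIV :: 'a set) = 0"
proof -
  obtain R where R: "R > 0" and cy: "\<And>y::'a. \<exists>c>0. \<forall>z r. dist y z < R/2 \<longrightarrow> 0 < r \<longrightarrow> r \<le> R/2 \<longrightarrow>
      c * r powr n \<le> measure mu (ball z r)"
    using LB by blast
  obtain D :: "'a set" where cD: "countable D" and neD: "D \<noteq> {}" and covD: "\<And>x. \<exists>d\<in>D. x \<in> ball d (R/2)"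
    using centers[OF R cy] by blast
  define dd where "dd = from_nat_into D"
  have H: "hausdorff_pre s \<delta> (UNIV :: 'a set) \<le> 0 + ennreal \<epsilon>" if e: "\<epsilon> > 0" for \<epsilon>
  proof -
    define ei where "ei i = \<epsilon> * (1/2)^Suc i" for i :: nat
    have ei: "ei i > 0" for i unfolding ei_def using e by simp
    have "\<forall>i. \<exists>F::nat \<Rightarrow> 'a set. ball (dd i) (R/2) \<subseteq> (\<Union>j. F j) \<and> (\<forall>j. bounded (F j) \<and> diameter (F j) \<le> \<delta>)
           \<and> (\<Sum>j. ennreal (diam_pow s (F j))) \<le> ennreal (ei i)"
    proof
      fix i
      obtain c where c: "c > 0" and cb: "\<forall>z r. dist (dd i) z < R/2 \<longrightarrow> 0 < r \<longrightarrow> r \<le> R/2 \<longrightarrow>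
          c * r powr n \<le> measure mu (ball z r)" using cy by blast
      show "\<exists>F::nat \<Rightarrow> 'a set. ball (dd i) (R/2) \<subseteq> (\<Union>j. F j) \<and> (\<forall>j. bounded (F j) \<and> diameter (F j) \<le> \<delta>)
           \<and> (\<Sum>j. ennreal (diam_pow s (F j))) \<le> ennreal (ei i)"
        by (rule H_local[OF R c cb s d ei])
    qed
    from choice[OF this] obtain FF where FF0: "\<forall>i. ball (dd i) (R/2) \<subseteq> (\<Union>j. FF i j) \<and> (\<forall>j. bounded (FF i j) \<and> diameter (FF i j) \<le> \<delta>)
           \<and> (\<Sum>j. ennreal (diam_pow s (FF i j))) \<le> ennreal (ei i)" by blast
    have FF: "\<And>i. ball (dd i) (R/2) \<subseteq> (\<Union>j. FF i j)"
      "\<And>i j. bounded (FF i j) \<and> diameter (FF i j) \<le> \<delta>"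
      "\<And>i. (\<Sum>j. ennreal (diam_pow s (FF i j))) \<le> ennreal (ei i)"
      using FF0 by blast+
    define G where "G k = FF (fst (prod_decode k)) (snd (prod_decode k))" for k
    have Gcov: "UNIV \<subseteq> (\<Union>k. G k)"
    proof
      fix x :: 'a
      obtain d where "d \<in> D" "x \<in> ball d (R/2)" using covD by blast
      moreover have "range dd = D" unfolding dd_def using range_from_nat_into[OF neD cD] .
      ultimately obtain i where "dd i = d" by blast
      then obtain j where "x \<in> FF i j" using FF(1)[of i] \<open>x \<in> ball d (R/2)\<close> by blast
      hence "x \<in> G (prod_encode (i, j))" by (simp add: G_def)
      thus "x \<in> (\<Union>k. G k)" by blast
    qed
    have Gb: "\<forall>k. bounded (G k) \<and> diameter (G k) \<le> \<delta>" using FF(2) by (simp add: G_def)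
    have "hausdorff_pre s \<delta> (UNIV :: 'a set) \<le> (\<Sum>k. ennreal (diam_pow s (G k)))"
      unfolding hausdorff_pre_def using Gcov Gb by (intro INF_lower) auto
    also have "\<dots> = (\<Sum>i. (\<Sum>j. ennreal (diam_pow s (FF i j))))"
      unfolding G_def
      using suminf_ennreal_2dimen[of "\<lambda>i. (\<Sum>j. ennreal (diam_pow s (FF i j)))"
          "\<lambda>p. ennreal (diam_pow s (FF (fst p) (snd p)))"] by simp
    also have "\<dots> \<le> (\<Sum>i. ennreal (ei i))"
      using FF(3) by (intro suminf_le) auto
    also have "(\<Sum>i. ennreal (ei i)) = ennreal \<epsilon>"
    proof -
      have "ei sums \<epsilon>" unfolding ei_def using sums_mult[OF power_half_series, of \<epsilon>] by simp
      hence "(\<lambda>i. ennreal (ei i)) sums ennreal \<epsilon>" using ei e by (simp add: less_imp_le)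
      thus ?thesis by (rule sums_unique[symmetric])
    qed
    finally show ?thesis by simp
  qed
  have "hausdorff_pre s \<delta> (UNIV :: 'a set) \<le> 0"
  proof (rule ennreal_le_epsilon)
    fix e :: real assume "0 < e"
    thus "hausdorff_pre s \<delta> (UNIV :: 'a set) \<le> 0 + ennreal e" by (rule H)
  qed
  thus ?thesis by simp
qed

lemma hd_le: "hausdorff_dim (UNIV :: 'a set) \<le> ereal n"
proof (rule dense_ge)
  fix x assume x: "ereal n < x"
  then obtain s where s: "ereal n < ereal s" "ereal s < x" using ereal_dense2 by blast
  hence sn: "s > n" by simp
  have "hausdorff_measure s (UNIV :: 'a set) = 0"
  proof -
    have "hausdorff_measure s (UNIV :: 'a set) \<le> 0"
      unfolding hausdorff_measure_def using hp0[OF sn] by (intro SUP_least) auto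
    thus ?thesis by simp
  qed
  hence "hausdorff_dim (UNIV :: 'a set) \<le> ereal s"
    unfolding hausdorff_dim_def using sn n by (intro INF_lower) auto
  thus "hausdorff_dim (UNIV :: 'a set) \<le> x" using s by simp
qed

end

theorem proposition3p8:
  fixes mu :: "'a::metric_space measure" and k n C :: real
  assumes "metric_measure_space mu"
    and "n \<ge> 1" and "C \<ge> 1"
    and "BG mu k n C"
  shows "hausdorff_dim (UNIV :: 'a set) \<le> ereal n"
  using hd_le[OF assms] .

end
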